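(* Let $\mathcal{R}$ be a tolerance relation on $X=\{1,\dots,n\}$ with chordal graph $G(\mathcal{R})$, and let $C$ be a maximal clique of $G(\mathcal{R})$. Let $F=\{(x_{ij})\in E(\mathcal{R})\mid x_{ij}=0\text{ unless }i,j\in C\}\subseteq E(\mathcal{R})^d$, equipped with the matrix order inherited from $E(\mathcal{R})^d$. Then the canonical linear identification $F\cong M_{|C|}(\mathbb{C})$, $(x_{ij})\mapsto (x_{ij})_{i,j\in C}$, is a complete order isomorphism (in particular $C^*_{\mathrm{env}}(F)=M_{|C|}(\mathbb{C})$).
   Context: A tolerance relation on $X=\{1,\dots,n\}$ is a reflexive symmetric relation $\mathcal{R}\subseteq X\times X$; its graph $G(\mathcal{R})$ has vertex set $X$ and an edge between distinct $i,j$ iff $(i,j)\in\mathcal{R}$. A graph is chordal if every cycle of length at least 4 has a chord. $E(\mathcal{R})=\{(x_{ij})\in M_n(\mathbb{C})\mid x_{ij}=0\text{ if }(i,j)\notin\mathcal{R}\}$. The dual $E(\mathcal{R})^d$ is identified with $E(\mathcal{R})$ with matrix order $M_m(E(\mathcal{R})^d)_+=\{M\in M_m(E(\mathcal{R}))\mid\exists N\in M_m(E(\mathcal{R})^\perp),\ M+N\in M_{mn}(\mathbb{C})_+\}$, $E(\mathcal{R})^\perp=\{y\in M_n(\mathbb{C})\mid y_{ij}=0\ \forall(i,j)\in\mathcal{R}\}$. *)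

theory Defs
  imports Complex_Main
begin

text \<open>Matrices in M_n(C) are represented as functions nat => nat => complex,
  indexed by {1..n} x {1..n} and zero outside that range.\<close>

type_synonym cmat = "nat \<Rightarrow> nat \<Rightarrow> complex"

definition Mat :: "nat \<Rightarrow> cmat set" where
  "Mat n = {x. \<forall>i j. (i \<notin> {1..n} \<or> j \<notin> {1..n}) \<longrightarrow> x i j = 0}"

definition tolerance :: "nat \<Rightarrow> (nat \<times> nat) set \<Rightarrow> bool" where
  "tolerance n R \<longleftrightarrow> R \<subseteq> {1..n} \<times> {1..n} \<and> refl_on {1..n} R \<and> sym R"

definition adj :: "(nat \<times> nat) set \<Rightarrow> nat \<Rightarrow> nat \<Rightarrow> bool" where
  "adj R a b \<longleftrightarrow> a \<noteq> b \<and> (a, b) \<in> R"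

definition chordal :: "nat \<Rightarrow> (nat \<times> nat) set \<Rightarrow> bool" where
  "chordal n R \<longleftrightarrow>
     (\<forall>vs. distinct vs \<and> length vs \<ge> 4 \<and> set vs \<subseteq> {1..n} \<and>
        (\<forall>i < length vs. adj R (vs ! i) (vs ! ((i + 1) mod length vs)))
      \<longrightarrow> (\<exists>i < length vs. \<exists>j < length vs. i \<noteq> j \<and>
             j \<noteq> (i + 1) mod length vs \<and> i \<noteq> (j + 1) mod length vs \<and>
             adj R (vs ! i) (vs ! j)))"

definition clique :: "nat \<Rightarrow> (nat \<times> nat) set \<Rightarrow> nat set \<Rightarrow> bool" where
  "clique n R C \<longleftrightarrow> C \<subseteq> {1..n} \<and> (\<forall>a\<in>C. \<forall>b\<in>C. a \<noteq> b \<longrightarrow> adj R a b)"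

definition maximal_clique :: "nat \<Rightarrow> (nat \<times> nat) set \<Rightarrow> nat set \<Rightarrow> bool" where
  "maximal_clique n R C \<longleftrightarrow> clique n R C \<and> (\<forall>D. clique n R D \<and> C \<subseteq> D \<longrightarrow> D = C)"

definition E :: "nat \<Rightarrow> (nat \<times> nat) set \<Rightarrow> cmat set" where
  "E n R = {x \<in> Mat n. \<forall>i j. (i, j) \<notin> R \<longrightarrow> x i j = 0}"

definition Eperp :: "nat \<Rightarrow> (nat \<times> nat) set \<Rightarrow> cmat set" where
  "Eperp n R = {y \<in> Mat n. \<forall>i j. (i, j) \<in> R \<longrightarrow> y i j = 0}"

definition psd_on :: "'a set \<Rightarrow> ('a \<Rightarrow> 'a \<Rightarrow> complex) \<Rightarrow> bool" where
  "psd_on I A \<longleftrightarrow> (\<forall>a\<in>I. \<forall>b\<in>I. A b a = cnj (A a b)) \<and>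
     (\<forall>v. Im (\<Sum>a\<in>I. \<Sum>b\<in>I. cnj (v a) * A a b * v b) = 0 \<and>
          0 \<le> Re (\<Sum>a\<in>I. \<Sum>b\<in>I. cnj (v a) * A a b * v b))"

text \<open>An element of M_m(M_n(C)) is an m x m array M of n x n matrices (blocks indexed
  by {1..m}); it is positive iff the associated mn x mn block matrix is psd.\<close>
definition block_psd :: "nat \<Rightarrow> nat \<Rightarrow> (nat \<Rightarrow> nat \<Rightarrow> cmat) \<Rightarrow> bool" where
  "block_psd m n M \<longleftrightarrow> psd_on ({1..m} \<times> {1..n}) (\<lambda>(k, i) (l, j). M k l i j)"

definition add_mat :: "cmat \<Rightarrow> cmat \<Rightarrow> cmat" where
  "add_mat x y = (\<lambda>i j. x i j + y i j)"

definition Ed_pos :: "nat \<Rightarrow> (nat \<times> nat) set \<Rightarrow> nat \<Rightarrow> (nat \<Rightarrow> nat \<Rightarrow> cmat) \<Rightarrow> bool" where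
  "Ed_pos n R m M \<longleftrightarrow> (\<forall>k\<in>{1..m}. \<forall>l\<in>{1..m}. M k l \<in> E n R) \<and>
     (\<exists>N. (\<forall>k\<in>{1..m}. \<forall>l\<in>{1..m}. N k l \<in> Eperp n R) \<and>
          block_psd m n (\<lambda>k l. add_mat (M k l) (N k l)))"

definition Fsub :: "nat \<Rightarrow> (nat \<times> nat) set \<Rightarrow> nat set \<Rightarrow> cmat set" where
  "Fsub n R C = {x \<in> E n R. \<forall>i j. \<not> (i \<in> C \<and> j \<in> C) \<longrightarrow> x i j = 0}"

definition cidx :: "nat set \<Rightarrow> nat \<Rightarrow> nat" where
  "cidx C i = sorted_list_of_set C ! (i - 1)"

definition compress :: "nat set \<Rightarrow> cmat \<Rightarrow> cmat" where
  "compress C x = (\<lambda>i j. if i \<in> {1..card C} \<and> j \<in> {1..card C}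
                         then x (cidx C i) (cidx C j) else 0)"

definition smult_mat :: "complex \<Rightarrow> cmat \<Rightarrow> cmat" where
  "smult_mat c x = (\<lambda>i j. c * x i j)"

end

theory Submission
  imports Defs
begin

lemma psd_cong:
  assumes "\<forall>a\<in>I. \<forall>b\<in>I. A a b = B a b"
  shows "psd_on I A = psd_on I B"
proof -
  have "\<And>v. (\<Sum>a\<in>I. \<Sum>b\<in>I. cnj (v a) * A a b * v b) = (\<Sum>a\<in>I. \<Sum>b\<in>I. cnj (v a) * B a b * v b)"
    using assms by (intro sum.cong refl) auto
  then show ?thesis unfolding psd_on_def using assms by auto
qed

lemma sum_ext_zero:
  assumes "finite I" "J \<subseteq> I" "\<forall>a\<in>I. \<forall>b\<in>I. (a \<notin> J \<or> b \<notin> J) \<longrightarrow> f a b = 0"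
  shows "(\<Sum>a\<in>I. \<Sum>b\<in>I. f a b) = (\<Sum>a\<in>J. \<Sum>b\<in>J. f a b)"
proof -
  have "(\<Sum>a\<in>I. \<Sum>b\<in>I. f a b) = (\<Sum>a\<in>J. \<Sum>b\<in>I. f a b)"
    using assms by (intro sum.mono_neutral_right) (auto intro!: sum.neutral)
  also have "\<dots> = (\<Sum>a\<in>J. \<Sum>b\<in>J. f a b)"
    using assms by (intro sum.cong refl sum.mono_neutral_right) (auto dest: finite_subset)
  finally show ?thesis .
qed

lemma psd_restrict:
  assumes "finite I" "J \<subseteq> I" "psd_on I A"
  shows "psd_on J A"
  unfolding psd_on_def
proof (intro conjI allI)
  show "\<forall>a\<in>J. \<forall>b\<in>J. A b a = cnj (A a b)" using assms unfolding psd_on_def by blast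
next
  fix v :: "_ \<Rightarrow> complex"
  define w where "w = (\<lambda>a. if a \<in> J then v a else 0)"
  have eq: "(\<Sum>a\<in>I. \<Sum>b\<in>I. cnj (w a) * A a b * w b) = (\<Sum>a\<in>J. \<Sum>b\<in>J. cnj (v a) * A a b * v b)"
    using sum_ext_zero[OF assms(1,2), of "\<lambda>a b. cnj (w a) * A a b * w b"]
    by (simp add: w_def)
  show "Im (\<Sum>a\<in>J. \<Sum>b\<in>J. cnj (v a) * A a b * v b) = 0"
       "0 \<le> Re (\<Sum>a\<in>J. \<Sum>b\<in>J. cnj (v a) * A a b * v b)"
    using assms(3) unfolding psd_on_def eq[symmetric] by blast+
qed

lemma psd_extend:
  assumes "finite I" "J \<subseteq> I" "\<forall>a\<in>I. \<forall>b\<in>I. (a \<notin> J \<or> b \<notin> J) \<longrightarrow> A a b = 0"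
    "psd_on J A"
  shows "psd_on I A"
  unfolding psd_on_def
proof (intro conjI allI)
  show "\<forall>a\<in>I. \<forall>b\<in>I. A b a = cnj (A a b)"
  proof (intro ballI)
    fix a b assume a: "a \<in> I" and b: "b \<in> I"
    show "A b a = cnj (A a b)"
    proof (cases "a \<in> J \<and> b \<in> J")
      case True
      then show ?thesis using assms(4) unfolding psd_on_def by blast
    next
      case False
      then have "A a b = 0" "A b a = 0" using assms(3) a b by blast+
      then show ?thesis by simp
    qed
  qed
next
  fix v
  have eq: "(\<Sum>a\<in>I. \<Sum>b\<in>I. cnj (v a) * A a b * v b) = (\<Sum>a\<in>J. \<Sum>b\<in>J. cnj (v a) * A a b * v b)"
    using sum_ext_zero[OF assms(1,2), of "\<lambda>a b. cnj (v a) * A a b * v b"] assms(3)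
    by simp
  show "Im (\<Sum>a\<in>I. \<Sum>b\<in>I. cnj (v a) * A a b * v b) = 0"
       "0 \<le> Re (\<Sum>a\<in>I. \<Sum>b\<in>I. cnj (v a) * A a b * v b)"
    using assms(4) unfolding psd_on_def eq by blast+
qed

lemma sum2_reindex:
  assumes "bij_betw h K J"
  shows "(\<Sum>a\<in>K. \<Sum>b\<in>K. f (h a) (h b)) = (\<Sum>a\<in>J. \<Sum>b\<in>J. f a b)"
proof -
  have "(\<Sum>a\<in>K. \<Sum>b\<in>K. f (h a) (h b)) = (\<Sum>a\<in>K. \<Sum>b\<in>J. f (h a) b)"
    by (intro sum.cong refl sum.reindex_bij_betw[OF assms])
  also have "\<dots> = (\<Sum>a\<in>J. \<Sum>b\<in>J. f a b)"
    by (rule sum.reindex_bij_betw[OF assms, of "\<lambda>a. \<Sum>b\<in>J. f a b"])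
  finally show ?thesis .
qed

lemma psd_bij:
  assumes "bij_betw h K J"
  shows "psd_on J A = psd_on K (\<lambda>a b. A (h a) (h b))"
proof
  assume p: "psd_on J A"
  show "psd_on K (\<lambda>a b. A (h a) (h b))"
    unfolding psd_on_def
  proof (intro conjI allI)
    show "\<forall>a\<in>K. \<forall>b\<in>K. A (h b) (h a) = cnj (A (h a) (h b))"
      using p assms unfolding psd_on_def bij_betw_def by blast
  next
    fix w :: "_ \<Rightarrow> complex"
    define v where "v = w \<circ> inv_into K h"
    have vw: "\<And>a. a \<in> K \<Longrightarrow> v (h a) = w a"
      using assms unfolding v_def bij_betw_def by auto
    have "(\<Sum>a\<in>K. \<Sum>b\<in>K. cnj (w a) * A (h a) (h b) * w b) = (\<Sum>a\<in>K. \<Sum>b\<in>K. cnj (v (h a)) * A (h a) (h b) * v (h b))"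
      using vw by (intro sum.cong refl) auto
    also have "\<dots> = (\<Sum>a\<in>J. \<Sum>b\<in>J. cnj (v a) * A a b * v b)"
      by (rule sum2_reindex[OF assms, of "\<lambda>a b. cnj (v a) * A a b * v b"])
    finally have eq: "(\<Sum>a\<in>K. \<Sum>b\<in>K. cnj (w a) * A (h a) (h b) * w b) = (\<Sum>a\<in>J. \<Sum>b\<in>J. cnj (v a) * A a b * v b)" .
    show "Im (\<Sum>a\<in>K. \<Sum>b\<in>K. cnj (w a) * A (h a) (h b) * w b) = 0"
       "0 \<le> Re (\<Sum>a\<in>K. \<Sum>b\<in>K. cnj (w a) * A (h a) (h b) * w b)"
      using p unfolding psd_on_def eq by blast+
  qed
next
  assume p: "psd_on K (\<lambda>a b. A (h a) (h b))"
  show "psd_on J A"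
    unfolding psd_on_def
  proof (intro conjI allI)
    show "\<forall>a\<in>J. \<forall>b\<in>J. A b a = cnj (A a b)"
      using p assms unfolding psd_on_def bij_betw_def by auto
  next
    fix v
    have eq: "(\<Sum>a\<in>K. \<Sum>b\<in>K. cnj (v (h a)) * A (h a) (h b) * v (h b)) = (\<Sum>a\<in>J. \<Sum>b\<in>J. cnj (v a) * A a b * v b)"
      by (rule sum2_reindex[OF assms, of "\<lambda>a b. cnj (v a) * A a b * v b"])
    have "Im (\<Sum>a\<in>K. \<Sum>b\<in>K. cnj (v (h a)) * A (h a) (h b) * v (h b)) = 0 \<and>
       0 \<le> Re (\<Sum>a\<in>K. \<Sum>b\<in>K. cnj (v (h a)) * A (h a) (h b) * v (h b))"
      using p unfolding psd_on_def by (rule conjunct2[THEN spec[of _ "\<lambda>a. v (h a)"]])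
    then show "Im (\<Sum>a\<in>J. \<Sum>b\<in>J. cnj (v a) * A a b * v b) = 0"
       "0 \<le> Re (\<Sum>a\<in>J. \<Sum>b\<in>J. cnj (v a) * A a b * v b)"
      unfolding eq by blast+
  qed
qed

lemma cidx_bij:
  assumes "finite C"
  shows "bij_betw (cidx C) {1..card C} C"
proof -
  have b1: "bij_betw (\<lambda>i. i - 1) {1..card C} {..<card C}"
    by (rule bij_betw_byWitness[where f'="\<lambda>i. i + 1"]) auto
  have b2: "bij_betw ((!) (sorted_list_of_set C)) {..<card C} C"
    using assms by (intro bij_betw_nth) auto
  have "bij_betw ((!) (sorted_list_of_set C) \<circ> (\<lambda>i. i - 1)) {1..card C} C"
    by (rule bij_betw_trans[OF b1 b2])
  then show ?thesis unfolding cidx_def comp_def .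
qed

theorem mainTheorem7:
  fixes n :: nat and R :: "(nat \<times> nat) set" and C :: "nat set"
  assumes "tolerance n R"
    and "chordal n R"
    and "maximal_clique n R C"
  shows "(\<forall>x\<in>Fsub n R C. \<forall>y\<in>Fsub n R C. \<forall>c::complex.
            compress C (add_mat x y) = add_mat (compress C x) (compress C y) \<and>
            compress C (smult_mat c x) = smult_mat c (compress C x))
       \<and> bij_betw (compress C) (Fsub n R C) (Mat (card C))
       \<and> (\<forall>m M. (\<forall>k\<in>{1..m}. \<forall>l\<in>{1..m}. M k l \<in> Fsub n R C) \<longrightarrow>
            (Ed_pos n R m M \<longleftrightarrow> block_psd m (card C) (\<lambda>k l. compress C (M k l))))"
proof -
  have Csub: "C \<subseteq> {1..n}" using assms(3) unfolding maximal_clique_def clique_def by blast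
  have fin: "finite C" using Csub finite_subset by blast
  have CR: "(a, b) \<in> R" if "a \<in> C" "b \<in> C" for a b
  proof (cases "a = b")
    case True
    then show ?thesis using assms(1) Csub that unfolding tolerance_def refl_on_def by blast
  next
    case False
    then show ?thesis using assms(3) that unfolding maximal_clique_def clique_def adj_def by blast
  qed
  have cb: "bij_betw (cidx C) {1..card C} C" by (rule cidx_bij[OF fin])
  have cimg: "cidx C i \<in> C" if "i \<in> {1..card C}" for i using cb that bij_betwE by blast
  have part1: "\<forall>x\<in>Fsub n R C. \<forall>y\<in>Fsub n R C. \<forall>c::complex.
            compress C (add_mat x y) = add_mat (compress C x) (compress C y) \<and>
            compress C (smult_mat c x) = smult_mat c (compress C x)"
    by (auto simp: compress_def add_mat_def smult_mat_def fun_eq_iff)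
  have inj: "inj_on (compress C) (Fsub n R C)"
  proof (rule inj_onI)
    fix x y assume x: "x \<in> Fsub n R C" and y: "y \<in> Fsub n R C" and eq: "compress C x = compress C y"
    show "x = y"
    proof (rule ext, rule ext)
      fix i j
      show "x i j = y i j"
      proof (cases "i \<in> C \<and> j \<in> C")
        case True
        then obtain i' j' where i': "i' \<in> {1..card C}" "cidx C i' = i"
          and j': "j' \<in> {1..card C}" "cidx C j' = j"
          using cb unfolding bij_betw_def by (metis imageE)
        have "compress C x i' j' = compress C y i' j'" using eq by simp
        then show ?thesis using i' j' by (simp add: compress_def)
      next
        case False
        then show ?thesis using x y unfolding Fsub_def by auto
      qed
    qed
  qed
  have img: "compress C ` Fsub n R C = Mat (card C)"
  proof
    show "compress C ` Fsub n R C \<subseteq> Mat (card C)"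
      by (auto simp: compress_def Mat_def)
  next
    show "Mat (card C) \<subseteq> compress C ` Fsub n R C"
    proof
      fix z assume z: "z \<in> Mat (card C)"
      define g where "g = inv_into {1..card C} (cidx C)"
      define x where "x = (\<lambda>i j. if i \<in> C \<and> j \<in> C then z (g i) (g j) else 0)"
      have gi: "g (cidx C i) = i" if "i \<in> {1..card C}" for i
        using cb that unfolding g_def bij_betw_def by (simp add: inv_into_f_f)
      have "x \<in> Fsub n R C"
        using Csub CR unfolding x_def Fsub_def E_def Mat_def by auto
      moreover have "compress C x = z"
      proof (rule ext, rule ext)
        fix i j
        show "compress C x i j = z i j"
          using z gi cimg unfolding compress_def x_def Mat_def by auto
      qed
      ultimately show "z \<in> compress C ` Fsub n R C" by blast
    qed
  qed
  have part3: "\<forall>m M. (\<forall>k\<in>{1..m}. \<forall>l\<in>{1..m}. M k l \<in> Fsub n R C) \<longrightarrow>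
            (Ed_pos n R m M \<longleftrightarrow> block_psd m (card C) (\<lambda>k l. compress C (M k l)))"
  proof (intro allI impI)
    fix m :: nat and M :: "nat \<Rightarrow> nat \<Rightarrow> cmat"
    assume MF: "\<forall>k\<in>{1..m}. \<forall>l\<in>{1..m}. M k l \<in> Fsub n R C"
    define I where "I = {1..m} \<times> {1..n}"
    define J where "J = {1..m} \<times> C"
    define K where "K = {1..m} \<times> {1..card C}"
    define B where "B = (\<lambda>(k::nat, i::nat) (l::nat, j::nat). M k l i j)"
    have finI: "finite I" unfolding I_def by simp
    have JI: "J \<subseteq> I" unfolding I_def J_def using Csub by auto
    have hb: "bij_betw (map_prod id (cidx C)) K J"
      unfolding K_def J_def by (rule bij_betw_map_prod[OF bij_betw_id cb])
    have "block_psd m (card C) (\<lambda>k l. compress C (M k l))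
        = psd_on K (\<lambda>a b. B (map_prod id (cidx C) a) (map_prod id (cidx C) b))"
      unfolding block_psd_def K_def[symmetric]
      by (rule psd_cong) (auto simp: K_def B_def compress_def)
    also have "\<dots> = psd_on J B" by (rule psd_bij[OF hb, symmetric])
    finally have eqB: "block_psd m (card C) (\<lambda>k l. compress C (M k l)) = psd_on J B" .
    have ME: "M k l \<in> E n R" if "k \<in> {1..m}" "l \<in> {1..m}" for k l
      using MF that unfolding Fsub_def by blast
    show "Ed_pos n R m M \<longleftrightarrow> block_psd m (card C) (\<lambda>k l. compress C (M k l))"
      unfolding eqB
    proof
      assume "Ed_pos n R m M"
      then obtain N where N: "\<forall>k\<in>{1..m}. \<forall>l\<in>{1..m}. N k l \<in> Eperp n R"
        and p: "block_psd m n (\<lambda>k l. add_mat (M k l) (N k l))"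
        unfolding Ed_pos_def by blast
      have "psd_on I (\<lambda>(k, i) (l, j). add_mat (M k l) (N k l) i j)"
        using p unfolding block_psd_def I_def .
      then have "psd_on J (\<lambda>(k, i) (l, j). add_mat (M k l) (N k l) i j)"
        by (rule psd_restrict[OF finI JI])
      moreover have "psd_on J (\<lambda>(k, i) (l, j). add_mat (M k l) (N k l) i j) = psd_on J B"
        using N CR unfolding J_def B_def add_mat_def Eperp_def by (intro psd_cong) auto
      ultimately show "psd_on J B" by simp
    next
      assume p: "psd_on J B"
      have supp: "\<forall>a\<in>I. \<forall>b\<in>I. a \<notin> J \<or> b \<notin> J \<longrightarrow> B a b = 0"
        using MF unfolding I_def J_def B_def Fsub_def by auto
      have "psd_on I B" by (rule psd_extend[OF finI JI supp p])
      then have bp: "block_psd m n (\<lambda>k l. add_mat (M k l) ((\<lambda>k l i j. 0) k l))"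
        unfolding block_psd_def I_def B_def add_mat_def by simp
      have "\<forall>k\<in>{1..m}. \<forall>l\<in>{1..m}. (\<lambda>k l i j. 0) k l \<in> Eperp n R"
        unfolding Eperp_def Mat_def by simp
      then show "Ed_pos n R m M" unfolding Ed_pos_def using ME bp
        by (intro conjI ballI exI[of _ "\<lambda>k l i j. 0"]) auto
    qed
  qed
  show ?thesis using part1 inj img part3 unfolding bij_betw_def by blast
qed

end
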